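(* Let $(r_{i,j})_{i\ge 0,\, j\in\mathbb{Z}}$ be the Pascal rhombus, defined by $r_{0,0}=r_{1,-1}=r_{1,0}=r_{1,1}=1$, $r_{0,j}=0$ for $j\neq 0$, $r_{1,j}=0$ for $j\notin\{-1,0,1\}$, and $$r_{i,j}=r_{i-1,j-1}+r_{i-1,j}+r_{i-1,j+1}+r_{i-2,j}\quad (i\ge 2,\ j\in\mathbb{Z}).$$ For $n\ge 0$ and $j\in\mathbb{Z}$, let $g^{(2)}_{n,j}$ be the number of 2-generalized grand Motzkin paths of length $n$ and height $j$. Then $r_{n,j}=g^{(2)}_{n,j}$ for all $n\ge 0$, $j\in\mathbb{Z}$.
   Context: A 2-generalized grand Motzkin path of length $n$ is a lattice path in $\mathbb{Z}\times\mathbb{Z}$ starting at $(0,0)$ and ending at a point with $x$-coordinate $n$, using steps $U=(1,1)$, $D=(1,-1)$, $H=(1,0)$ and $H_2=(2,0)$, with no restriction of staying above the $x$-axis. Its height is its final $y$-coordinate. *)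

theory Defs
  imports Main
begin

fun rhombus :: "nat \<Rightarrow> int \<Rightarrow> nat" where
  "rhombus 0 j = (if j = 0 then 1 else 0)"
| "rhombus (Suc 0) j = (if j \<in> {-1, 0, 1} then 1 else 0)"
| "rhombus (Suc (Suc i)) j =
     rhombus (Suc i) (j - 1) + rhombus (Suc i) j + rhombus (Suc i) (j + 1) + rhombus i j"

datatype step = U | D | H | H2

fun step_dx :: "step \<Rightarrow> nat" where
  "step_dx U = 1" | "step_dx D = 1" | "step_dx H = 1" | "step_dx H2 = 2"

fun step_dy :: "step \<Rightarrow> int" where
  "step_dy U = 1" | "step_dy D = -1" | "step_dy H = 0" | "step_dy H2 = 0"

text \<open>A path from (0,0) is a list of steps; its length is its final x-coordinate,
  its height its final y-coordinate.\<close>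
definition path_length :: "step list \<Rightarrow> nat" where
  "path_length p = (\<Sum>s\<leftarrow>p. step_dx s)"

definition path_height :: "step list \<Rightarrow> int" where
  "path_height p = (\<Sum>s\<leftarrow>p. step_dy s)"

definition grand_motzkin2 :: "nat \<Rightarrow> int \<Rightarrow> nat" where
  "grand_motzkin2 n j = card {p. path_length p = n \<and> path_height p = j}"

end

theory Submission
  imports Defs
begin

definition S :: "nat \<Rightarrow> int \<Rightarrow> step list set" where
  "S n j = {p. path_length p = n \<and> path_height p = j}"

lemma pl_simps[simp]: "path_length [] = 0" "path_length (s#p) = step_dx s + path_length p"
  by (simp_all add: path_length_def)

lemma ph_simps[simp]: "path_height [] = 0" "path_height (s#p) = step_dy s + path_height p"
  by (simp_all add: path_height_def)

lemma pl0: "path_length p = 0 \<longleftrightarrow> p = []"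
proof (cases p)
  case (Cons s q) then show ?thesis by (cases s) auto
qed simp

lemma S0: "S 0 j = (if j = 0 then {[]} else {})"
  by (auto simp: S_def pl0)

lemma S_split: "S (Suc n) j = Cons U ` S n (j-1) \<union> Cons D ` S n (j+1) \<union> Cons H ` S n j
   \<union> (if n = 0 then {} else Cons H2 ` S (n - 1) j)"
proof (rule set_eqI)
  fix p show "p \<in> S (Suc n) j \<longleftrightarrow> p \<in> Cons U ` S n (j-1) \<union> Cons D ` S n (j+1) \<union> Cons H ` S n j
   \<union> (if n = 0 then {} else Cons H2 ` S (n - 1) j)"
  proof (cases p)
    case Nil then show ?thesis by (auto simp: S_def)
  next
    case (Cons s q)
    then show ?thesis by (cases s) (auto simp: S_def)
  qed
qed

lemma card4: "finite A \<Longrightarrow> finite B \<Longrightarrow> finite C \<Longrightarrow> finite E \<Longrightarrow>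
  card (Cons U ` A \<union> Cons D ` B \<union> Cons H ` C \<union> Cons H2 ` E) = card A + card B + card C + card E
  \<and> finite (Cons U ` A \<union> Cons D ` B \<union> Cons H ` C \<union> Cons H2 ` E)"
proof -
  assume f: "finite A" "finite B" "finite C" "finite E"
  have i: "card (Cons s ` X) = card X" for s and X :: "step list set" by (simp add: card_image)
  have "card (Cons U ` A \<union> Cons D ` B \<union> Cons H ` C \<union> Cons H2 ` E)
     = card (Cons U ` A \<union> Cons D ` B \<union> Cons H ` C) + card (Cons H2 ` E)"
    by (rule card_Un_disjoint) (use f in auto)
  also have "card (Cons U ` A \<union> Cons D ` B \<union> Cons H ` C)
     = card (Cons U ` A \<union> Cons D ` B) + card (Cons H ` C)"
    by (rule card_Un_disjoint) (use f in auto)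
  also have "card (Cons U ` A \<union> Cons D ` B) = card (Cons U ` A) + card (Cons D ` B)"
    by (rule card_Un_disjoint) (use f in auto)
  finally show ?thesis using f by (simp add: i)
qed

lemma main: "finite (S n j) \<and> card (S n j) = rhombus n j"
proof (induction n j rule: rhombus.induct)
  case (1 j) then show ?case by (simp add: S0)
next
  case (2 j)
  have "S (Suc 0) j = Cons U ` S 0 (j-1) \<union> Cons D ` S 0 (j+1) \<union> Cons H ` S 0 j \<union> Cons H2 ` {}"
    using S_split[of 0 j] by simp
  moreover have "finite (S 0 k)" for k by (simp add: S0)
  ultimately show ?case using card4[of "S 0 (j-1)" "S 0 (j+1)" "S 0 j" "{}"]
    by (simp add: S0)
next
  case (3 i j)
  have "S (Suc (Suc i)) j = Cons U ` S (Suc i) (j-1) \<union> Cons D ` S (Suc i) (j+1) \<union> Cons H ` S (Suc i) j \<union> Cons H2 ` S i j"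
    using S_split[of "Suc i" j] by simp
  then show ?case using card4[of "S (Suc i) (j-1)" "S (Suc i) (j+1)" "S (Suc i) j" "S i j"] 3
    by simp
qed

theorem theorem2p3:
  fixes n :: nat and j :: int
  shows "rhombus n j = grand_motzkin2 n j"
  using main[of n j] by (simp add: grand_motzkin2_def S_def)

end
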